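(* Consider the house allocation model with dichotomous preferences as described in the context, satisfying $\Gamma(I,O)=O$ and $|\{i\in I:C_i\cap O'\ne\emptyset\}|>|O'|$ for every nonempty proper subset $O'\subsetneq O$. Let $X^*_1,\dots,X^*_m$ be the sequence of bottleneck sets with associated $P_0,\dots,P_{m-1}$. Then for every FTTC mechanism satisfying stepwise equal-endowment equal treatment, the output assignment $p$ is an egalitarian solution: for every $k=1,\dots,m$ and every $i\in X^*_k$, $$\sum_{o\in C_i}p_{i,o}=\frac{|\Gamma(X^*_k,P_{k-1})|}{|X^*_k|}.$$
   Context: Fractional endowment exchange (FEE) problem: a tuple $(I,O,\succsim_I,\omega)$ where $I$ is a finite set of agents, $O$ a finite set of objects, each agent $i$ has a complete and transitive (possibly non-strict) preference relation $\succsim_i$ over $O$ with asymmetric part $\succ_i$ and symmetric part $\sim_i$, and $\omega=(\omega_{i,o})_{i\in I,o\in O}$ is an endowment matrix with $\omega_{i,o}\in[0,1]$, $\sum_{o\in O}\omega_{i,o}\le 1$ for each $i$, and $q_o=\sum_{i\in I}\omega_{i,o}$ an integer for each $o$. An assignment is a nonnegative matrix $p=(p_{i,o})$ with $\sum_i p_{i,o}\le q_o$ for all $o$ and $\sum_o p_{i,o}\le 1$ for all $i$; $\omega_i=(\omega_{i,o})_{o\in O}$. House allocation model: $|O|=|I|$ and $\omega_{i,o}=1/|I|$ for all $i,o$. Dichotomous preferences: each agent $i$ has a set $C_i\subseteq O$ of acceptable objects, with $o\sim_i o'$ whenever $o,o'\in C_i$ or $o,o'\notin C_i$, and $o\succ_i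 o'$ whenever $o\in C_i$, $o'\notin C_i$. For nonempty $Y\subseteq I$ and $O'\subseteq O$, $\Gamma(Y,O')=(\bigcup_{i\in Y}C_i)\cap O'$. Bottleneck sets: set $Z_0=I$, $P_0=O$. For $k\ge1$ while $Z_{k-1}\ne\emptyset$, let $X^*_k$ be the largest-cardinality minimizer over nonempty $Y\subseteq Z_{k-1}$ of $|\Gamma(Y,P_{k-1})|/|Y|$ (the union of minimizers is a minimizer, so it is unique), and set $Z_k=Z_{k-1}\setminus X^*_k$, $P_k=P_{k-1}\setminus\Gamma(X^*_k,P_{k-1})$. Let $m$ be the index with $Z_m=\emptyset$. FTTC (Fractional Top Trading Cycle) on the full preference domain. Initialize $\omega(0)=\omega$, $p(0)=0$, $O(0)=O$. At step $d\ge1$ (with $O(d-1)\ne\emptyset$): (i) Labeling. Put $T_0=O(d-1)$. For $k=1,2,\dots$: let $L_k$ be the set of agents $i\notin L_1\cup\dots\cup L_{k-1}$ for which there exist $o\in T_{k-1}$ and $o'\in O\setminus(T_0\cup\dots\cup T_{k-1})$ with $p_{i,o'}(d-1)>0$ and $o\sim_i o'$; for $i\in L_k$ let $\tilde O_i(d-1)$ be the set of all such $o'$ for this $i$, and let $T_k=\bigcup_{i\in L_k}\tilde O_i(d-1)$. Stop at the first $k$ with $L_k=\emptyset$. Set $L(d-1)=\bigcup_k L_k$, $\tilde O(d-1)=\bigcup_{k\ge1}T_k$, $\overline{O}(d-1)=O(d-1)\cup\tilde O(d-1)$, and $\tilde O_i(d-1)=\emptyset$ for $i\notin L(d-1)$.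 (ii) Pointing. The active agents are $I(d-1)=L(d-1)\cup\{i\in I:\sum_o\omega_{i,o}(d-1)>0\}$. For $i\in I(d-1)$ let $B_i$ be the set of $\succsim_i$-maximal elements of $\overline{O}(d-1)$, let $k_i$ be the least $k\ge0$ with $B_i\cap T_k\ne\emptyset$, and let $A_i(d)=B_i\cap T_{k_i}$. (iii) Trading. The mechanism chooses (possibly depending on the history): a ratio matrix $\lambda(d)=(\lambda_{i,o}(d))_{i\in I(d-1),o\in\overline{O}(d-1)}$, nonnegative, with $\sum_{i\in I(d-1)}\lambda_{i,o}(d)=1$ for each $o\in\overline O(d-1)$, $\lambda_{i,o}(d)>0$ only if $\omega_{i,o}(d-1)>0$ (for $o\in O(d-1)$) and only if $o\in\tilde O_i(d-1)$ (for $o\in\tilde O(d-1)$); a quota matrix $\beta(d)$ on $I(d-1)\times O(d-1)$ with $0\le\beta_{i,o}(d)\le\omega_{i,o}(d-1)$; a division matrix $\gamma(d)$ on $I(d-1)\times\overline O(d-1)$, nonnegative, with $\sum_o\gamma_{i,o}(d)=1$ and $\gamma_{i,o}(d)>0$ only if $o\in A_i(d)$. Let $x^*(d)=(x^*_a(d))_{a\in I(d-1)\cup\overline O(d-1)}$ be the maximum (componentwise largest) nonnegative solution of $x_o=\sum_{i\in I(d-1)}\gamma_{i,o}(d)x_i$ for all $o\in\overline O(d-1)$ and $x_i=\sum_{o\in\overline O(d-1)}\lambda_{i,o}(d)x_o$ for all $i\in I(d-1)$, subject to $\lambda_{i,o}(d)x_o\le\beta_{i,o}(d)$ for $o\in O(d-1)$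 and $\lambda_{i,o}(d)x_o\le p_{i,o}(d-1)$ for $o\in\tilde O(d-1)$. For $i\in I(d-1)$: $\omega_{i,o}(d)=\omega_{i,o}(d-1)-\lambda_{i,o}(d)x^*_o(d)$ if $o\in O(d-1)$ and $0$ otherwise; $p_{i,o}(d)=p_{i,o}(d-1)-\mathbf 1[o\in\tilde O_i(d-1)]\lambda_{i,o}(d)x^*_o(d)+\gamma_{i,o}(d)x^*_i(d)$ (with $\gamma_{i,o}(d)=0$ for $o\notin\overline O(d-1)$). For $i\notin I(d-1)$, $\omega_i(d)=\omega_i(d-1)$, $p_i(d)=p_i(d-1)$. Let $O(d)=\{o\in O(d-1):\sum_i\omega_{i,o}(d)>0\}$. If $O(d)=\emptyset$ stop and output $p(d)$; otherwise go to step $d+1$. (Standing assumption: the maximum solution exists at each step and the procedure ends after finitely many steps.) An FTTC mechanism is specified by a rule choosing $\lambda(d),\beta(d),\gamma(d)$ at every step. Stepwise equal-endowment equal treatment (stepwise EEET): at every step $d$, for all $i,j\in I(d-1)$, if $\omega_i(d-1)=\omega_j(d-1)$ then $\lambda_{i,o}(d)=\lambda_{j,o}(d)$ for all $o\in O(d-1)$. *)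

theory Defs
  imports Main "HOL.Real"
begin

(* A preference profile R: R i a b  means  a \<succeq>_i b. *)
definition indiff :: "('i \<Rightarrow> 'o \<Rightarrow> 'o \<Rightarrow> bool) \<Rightarrow> 'i \<Rightarrow> 'o \<Rightarrow> 'o \<Rightarrow> bool" where
  "indiff R i a b \<longleftrightarrow> R i a b \<and> R i b a"

definition dich_pref :: "('i \<Rightarrow> 'o set) \<Rightarrow> 'i \<Rightarrow> 'o \<Rightarrow> 'o \<Rightarrow> bool" where
  "dich_pref C i a b \<longleftrightarrow> (a \<in> C i \<or> b \<notin> C i)"

definition Ocur :: "'i set \<Rightarrow> 'o set \<Rightarrow> ('i \<Rightarrow> 'o \<Rightarrow> real) \<Rightarrow> 'o set" where
  "Ocur I Os \<omega> = {b \<in> Os. (\<Sum>i\<in>I. \<omega> i b) > 0}"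

(* Labeling. lab ... k = (L_1 \<union>..\<union> L_k, T_0 \<union>..\<union> T_k, L_k, T_k, (\<lambda>i. tilde O_i if i \<in> L_k else {})) *)
fun lab :: "'i set \<Rightarrow> 'o set \<Rightarrow> ('i \<Rightarrow> 'o \<Rightarrow> 'o \<Rightarrow> bool) \<Rightarrow> ('i \<Rightarrow> 'o \<Rightarrow> real) \<Rightarrow> 'o set \<Rightarrow> nat
            \<Rightarrow> 'i set \<times> 'o set \<times> 'i set \<times> 'o set \<times> ('i \<Rightarrow> 'o set)" where
  "lab I Os R p T0 0 = ({}, T0, {}, T0, (\<lambda>i. {}))"
| "lab I Os R p T0 (Suc k) =
     (case lab I Os R p T0 k of (Lc, Tc, _, Tl, _) \<Rightarrow>
       (let Ot = (\<lambda>i. {b' \<in> Os - Tc. p i b' > 0 \<and> (\<exists>b\<in>Tl. indiff R i b b')});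
            Ln = {i \<in> I - Lc. Ot i \<noteq> {}};
            Otn = (\<lambda>i. if i \<in> Ln then Ot i else {});
            Tn = \<Union> (Otn ` Ln)
        in (Lc \<union> Ln, Tc \<union> Tn, Ln, Tn, Otn)))"

definition labL where
  "labL I Os R \<omega> p k = fst (snd (snd (lab I Os R p (Ocur I Os \<omega>) k)))"
definition labT where
  "labT I Os R \<omega> p k = fst (snd (snd (snd (lab I Os R p (Ocur I Os \<omega>) k))))"
definition labOt where
  "labOt I Os R \<omega> p k = snd (snd (snd (snd (lab I Os R p (Ocur I Os \<omega>) k))))"

definition Lall where
  "Lall I Os R \<omega> p = (\<Union>k. labL I Os R \<omega> p k)"
definition Otil where
  "Otil I Os R \<omega> p = (\<Union>k\<in>{1..}. labT I Os R \<omega> p k)"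
(* tilde O_i(d-1) (empty for i not in L(d-1)) *)
definition Otil_i where
  "Otil_i I Os R \<omega> p i = (\<Union>k. labOt I Os R \<omega> p k i)"
definition Obar where
  "Obar I Os R \<omega> p = Ocur I Os \<omega> \<union> Otil I Os R \<omega> p"

definition Iact where
  "Iact I Os R \<omega> p = Lall I Os R \<omega> p \<union> {i \<in> I. (\<Sum>b\<in>Os. \<omega> i b) > 0}"

definition Bset where
  "Bset I Os R \<omega> p i = {b \<in> Obar I Os R \<omega> p. \<forall>b'\<in>Obar I Os R \<omega> p. R i b b'}"
definition kidx where
  "kidx I Os R \<omega> p i = (LEAST k. Bset I Os R \<omega> p i \<inter> labT I Os R \<omega> p k \<noteq> {})"
definition Aset where
  "Aset I Os R \<omega> p i = Bset I Os R \<omega> p i \<inter> labT I Os R \<omega> p (kidx I Os R \<omega> p i)"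

definition fttc_sol where
  "fttc_sol I Os R \<omega> p lam beta gam xi xo \<longleftrightarrow>
     (let Ia = Iact I Os R \<omega> p; Ob = Obar I Os R \<omega> p; T0 = Ocur I Os \<omega>; Tt = Otil I Os R \<omega> p in
      (\<forall>i\<in>Ia. xi i \<ge> 0) \<and> (\<forall>b\<in>Ob. xo b \<ge> 0) \<and>
      (\<forall>b\<in>Ob. xo b = (\<Sum>i\<in>Ia. gam i b * xi i)) \<and>
      (\<forall>i\<in>Ia. xi i = (\<Sum>b\<in>Ob. lam i b * xo b)) \<and>
      (\<forall>i\<in>Ia. \<forall>b\<in>T0. lam i b * xo b \<le> beta i b) \<and>
      (\<forall>i\<in>Ia. \<forall>b\<in>Tt. lam i b * xo b \<le> p i b))"

definition fttc_maxsol where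
  "fttc_maxsol I Os R \<omega> p lam beta gam xi xo \<longleftrightarrow>
     fttc_sol I Os R \<omega> p lam beta gam xi xo \<and>
     (\<forall>yi yo. fttc_sol I Os R \<omega> p lam beta gam yi yo \<longrightarrow>
        (\<forall>i\<in>Iact I Os R \<omega> p. yi i \<le> xi i) \<and> (\<forall>b\<in>Obar I Os R \<omega> p. yo b \<le> xo b))"

(* One FTTC step d: from (\<omega>(d-1), p(d-1)) with choices \<lambda>(d), \<beta>(d), \<gamma>(d) to (\<omega>(d), p(d)).
   Matrices are compared on I \<times> Os only. *)
definition fttc_step where
  "fttc_step I Os R \<omega> p lam beta gam \<omega>' p' \<longleftrightarrow>
     (let Ia = Iact I Os R \<omega> p; Ob = Obar I Os R \<omega> p; T0 = Ocur I Os \<omega>; Tt = Otil I Os R \<omega> p in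
      T0 \<noteq> {} \<and>
      (\<forall>i\<in>Ia. \<forall>b\<in>Ob. lam i b \<ge> 0) \<and>
      (\<forall>b\<in>Ob. (\<Sum>i\<in>Ia. lam i b) = 1) \<and>
      (\<forall>i\<in>Ia. \<forall>b\<in>T0. lam i b > 0 \<longrightarrow> \<omega> i b > 0) \<and>
      (\<forall>i\<in>Ia. \<forall>b\<in>Tt. lam i b > 0 \<longrightarrow> b \<in> Otil_i I Os R \<omega> p i) \<and>
      (\<forall>i\<in>Ia. \<forall>b\<in>T0. 0 \<le> beta i b \<and> beta i b \<le> \<omega> i b) \<and>
      (\<forall>i\<in>Ia. (\<forall>b\<in>Ob. gam i b \<ge> 0) \<and> (\<Sum>b\<in>Ob. gam i b) = 1 \<and>
                 (\<forall>b\<in>Ob. gam i b > 0 \<longrightarrow> b \<in> Aset I Os R \<omega> p i)) \<and>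
      (\<exists>xi xo. fttc_maxsol I Os R \<omega> p lam beta gam xi xo \<and>
         (\<forall>i\<in>I. \<forall>b\<in>Os. \<omega>' i b =
             (if i \<in> Ia then (if b \<in> T0 then \<omega> i b - lam i b * xo b else 0) else \<omega> i b)) \<and>
         (\<forall>i\<in>I. \<forall>b\<in>Os. p' i b =
             (if i \<in> Ia then p i b
                 - (if b \<in> Otil_i I Os R \<omega> p i then lam i b * xo b else 0)
                 + (if b \<in> Ob then gam i b * xi i else 0)
              else p i b))))"

(* A complete (terminating) run of an FTTC mechanism with D steps: ws d = \<omega>(d), ps d = p(d),
   lams d, betas d, gams d = \<lambda>(d), \<beta>(d), \<gamma>(d). The output is ps D. *)
definition fttc_run where
  "fttc_run I Os R \<omega>0 D ws ps lams betas gams \<longleftrightarrow>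
     (\<forall>i\<in>I. \<forall>b\<in>Os. ws 0 i b = \<omega>0 i b \<and> ps 0 i b = 0) \<and>
     (\<forall>d\<in>{1..D}. fttc_step I Os R (ws (d-1)) (ps (d-1)) (lams d) (betas d) (gams d) (ws d) (ps d)) \<and>
     Ocur I Os (ws D) = {}"

definition stepwise_EEET where
  "stepwise_EEET I Os R D ws ps lams \<longleftrightarrow>
     (\<forall>d\<in>{1..D}. \<forall>i\<in>Iact I Os R (ws (d-1)) (ps (d-1)). \<forall>j\<in>Iact I Os R (ws (d-1)) (ps (d-1)).
        (\<forall>b\<in>Os. ws (d-1) i b = ws (d-1) j b) \<longrightarrow>
        (\<forall>b\<in>Ocur I Os (ws (d-1)). lams d i b = lams d j b))"

definition Gam :: "('i \<Rightarrow> 'o set) \<Rightarrow> 'i set \<Rightarrow> 'o set \<Rightarrow> 'o set" where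
  "Gam C Y Os' = (\<Union>i\<in>Y. C i) \<inter> Os'"

definition ratio :: "('i \<Rightarrow> 'o set) \<Rightarrow> 'i set \<Rightarrow> 'o set \<Rightarrow> real" where
  "ratio C Y P = real (card (Gam C Y P)) / real (card Y)"

definition is_bneck :: "('i \<Rightarrow> 'o set) \<Rightarrow> 'i set \<Rightarrow> 'o set \<Rightarrow> 'i set \<Rightarrow> bool" where
  "is_bneck C Z P X \<longleftrightarrow> X \<subseteq> Z \<and> X \<noteq> {} \<and>
     (\<forall>Y. Y \<subseteq> Z \<and> Y \<noteq> {} \<longrightarrow> ratio C X P \<le> ratio C Y P) \<and>
     (\<forall>Y. Y \<subseteq> Z \<and> Y \<noteq> {} \<and> ratio C Y P = ratio C X P \<longrightarrow> card Y \<le> card X)"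

(* bseq k = (Z_k, P_k) *)
fun bseq :: "('i \<Rightarrow> 'o set) \<Rightarrow> 'i set \<Rightarrow> 'o set \<Rightarrow> nat \<Rightarrow> 'i set \<times> 'o set" where
  "bseq C I Os 0 = (I, Os)"
| "bseq C I Os (Suc k) = (case bseq C I Os k of (Z, P) \<Rightarrow>
      (let X = (THE X. is_bneck C Z P X) in (Z - X, P - Gam C X P)))"

(* X^*_k for k \<ge> 1 *)
definition bX :: "('i \<Rightarrow> 'o set) \<Rightarrow> 'i set \<Rightarrow> 'o set \<Rightarrow> nat \<Rightarrow> 'i set" where
  "bX C I Os k = (THE X. is_bneck C (fst (bseq C I Os (k-1))) (snd (bseq C I Os (k-1))) X)"

definition bm :: "('i \<Rightarrow> 'o set) \<Rightarrow> 'i set \<Rightarrow> 'o set \<Rightarrow> nat" where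
  "bm C I Os = (LEAST m. fst (bseq C I Os m) = {})"

end

theory Submission
  imports Defs
begin


lemma indiff_dich: "indiff (dich_pref C) i a b \<longleftrightarrow> (a \<in> C i \<longleftrightarrow> b \<in> C i)"
  unfolding indiff_def dich_pref_def by blast

lemma lab_Suc': "lab I Os R p T0 (Suc k) = (let Lc = fst (lab I Os R p T0 k); Tc = fst (snd (lab I Os R p T0 k)); Tl = fst (snd (snd (snd (lab I Os R p T0 k))));
   Ot = (\<lambda>i. {b' \<in> Os - Tc. p i b' > 0 \<and> (\<exists>b\<in>Tl. indiff R i b b')});
   Ln = {i \<in> I - Lc. Ot i \<noteq> {}};
   Otn = (\<lambda>i. if i \<in> Ln then Ot i else {})
  in (Lc \<union> Ln, Tc \<union> \<Union> (Otn ` Ln), Ln, \<Union> (Otn ` Ln), Otn))"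
  by (cases "lab I Os R p T0 k") (simp add: Let_def)

definition "LcA I Os R p T0 k = fst (lab I Os R p T0 k)"
definition "TcA I Os R p T0 k = fst (snd (lab I Os R p T0 k))"
definition "LnA I Os R p T0 k = fst (snd (snd (lab I Os R p T0 k)))"
definition "TlA I Os R p T0 k = fst (snd (snd (snd (lab I Os R p T0 k))))"
definition "OtnA I Os R p T0 k = snd (snd (snd (snd (lab I Os R p T0 k))))"
definition "OtA I Os R p T0 k i = {b' \<in> Os - TcA I Os R p T0 k. p i b' > 0 \<and> (\<exists>b\<in>TlA I Os R p T0 k. indiff R i b b')}"

lemma A0: "LcA I Os R p T0 0 = {}" "TcA I Os R p T0 0 = T0" "LnA I Os R p T0 0 = {}"
  "TlA I Os R p T0 0 = T0" "OtnA I Os R p T0 0 i = {}"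
  by (simp_all add: LcA_def TcA_def LnA_def TlA_def OtnA_def)

lemma ASuc:
  "LnA I Os R p T0 (Suc k) = {i \<in> I - LcA I Os R p T0 k. OtA I Os R p T0 k i \<noteq> {}}"
  "LcA I Os R p T0 (Suc k) = LcA I Os R p T0 k \<union> LnA I Os R p T0 (Suc k)"
  "OtnA I Os R p T0 (Suc k) i = (if i \<in> LnA I Os R p T0 (Suc k) then OtA I Os R p T0 k i else {})"
  "TlA I Os R p T0 (Suc k) = (\<Union>j\<in>LnA I Os R p T0 (Suc k). OtA I Os R p T0 k j)"
  "TcA I Os R p T0 (Suc k) = TcA I Os R p T0 k \<union> TlA I Os R p T0 (Suc k)"
  unfolding LcA_def TcA_def LnA_def TlA_def OtnA_def OtA_def lab_Suc'[of I Os R p T0 k] Let_def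
  by auto

lemma lab_basic:
  assumes "T0 \<subseteq> Os"
  shows "T0 \<subseteq> TcA I Os R p T0 k \<and> TlA I Os R p T0 k \<subseteq> TcA I Os R p T0 k \<and> TcA I Os R p T0 k \<subseteq> Os
    \<and> LcA I Os R p T0 k \<subseteq> I \<and> TcA I Os R p T0 k \<subseteq> T0 \<union> (\<Union>k'\<in>{1..}. TlA I Os R p T0 k')"
proof (induction k)
  case 0
  then show ?case using assms by (simp add: A0)
next
  case (Suc k)
  have "TlA I Os R p T0 (Suc k) \<subseteq> (\<Union>k'\<in>{1..}. TlA I Os R p T0 k')" by force
  with Suc show ?case by (auto simp: ASuc OtA_def)
qed

lemma Ln_sub: "LnA I Os R p T0 k \<subseteq> I"
  by (cases k) (auto simp: A0 ASuc)

lemma Otn_sub: "OtnA I Os R p T0 k i \<subseteq> TlA I Os R p T0 k"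
  by (cases k) (auto simp: A0 ASuc)

lemma Tl_Suc_sub: "TlA I Os R p T0 (Suc k) \<subseteq> Os - TcA I Os R p T0 k"
  by (auto simp: ASuc OtA_def)

lemma Tl_Suc_T0: "T0 \<subseteq> Os \<Longrightarrow> TlA I Os R p T0 (Suc k) \<inter> T0 = {}"
  using lab_basic[of T0 Os I R p k] Tl_Suc_sub[of I Os R p T0 k] by blast

lemma labL_eq: "labL I Os R w p k = LnA I Os R p (Ocur I Os w) k"
  by (simp add: labL_def LnA_def)
lemma labT_eq: "labT I Os R w p k = TlA I Os R p (Ocur I Os w) k"
  by (simp add: labT_def TlA_def)
lemma labOt_eq: "labOt I Os R w p k = OtnA I Os R p (Ocur I Os w) k"
  by (simp add: labOt_def OtnA_def)

lemma Ocur_sub: "Ocur I Os w \<subseteq> Os" by (auto simp: Ocur_def)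

lemma Otil_sub: "Otil I Os R w p \<subseteq> Os"
proof -
  have "labT I Os R w p k \<subseteq> Os" if "k \<ge> 1" for k
    using that Tl_Suc_sub[of I Os R p "Ocur I Os w"] by (cases k) (auto simp: labT_eq)
  then show ?thesis by (auto simp: Otil_def)
qed

lemma Otil_disj: "Otil I Os R w p \<inter> Ocur I Os w = {}"
proof -
  have "labT I Os R w p k \<inter> Ocur I Os w = {}" if "k \<ge> 1" for k
    using that Tl_Suc_T0[OF Ocur_sub[of I Os w], of I R p] by (cases k) (auto simp: labT_eq)
  then show ?thesis by (auto simp: Otil_def)
qed

lemma Otil_i_sub: "Otil_i I Os R w p i \<subseteq> Otil I Os R w p"
proof -
  have "labOt I Os R w p k i \<subseteq> Otil I Os R w p" for k
  proof (cases k)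
    case 0 then show ?thesis by (simp add: labOt_eq A0)
  next
    case (Suc k') then show ?thesis
      using Otn_sub[of I Os R p "Ocur I Os w" k i] unfolding Otil_def labOt_eq labT_eq by force
  qed
  then show ?thesis by (auto simp: Otil_i_def)
qed

lemma Lall_sub: "Lall I Os R w p \<subseteq> I"
  using Ln_sub by (fastforce simp: Lall_def labL_eq)

lemma Obar_sub: "Obar I Os R w p \<subseteq> Os"
  using Otil_sub[of I Os R w p] Ocur_sub[of I Os w] by (auto simp: Obar_def)

lemma Tc_Obar: "TcA I Os R p (Ocur I Os w) k \<subseteq> Obar I Os R w p"
  using lab_basic[OF Ocur_sub[of I Os w], of I R p k] by (auto simp: Obar_def Otil_def labT_eq)

lemma Obar_Tl: "b \<in> Obar I Os R w p \<Longrightarrow> \<exists>k. b \<in> TlA I Os R p (Ocur I Os w) k"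
proof -
  assume "b \<in> Obar I Os R w p"
  then have "b \<in> Ocur I Os w \<or> (\<exists>k. b \<in> TlA I Os R p (Ocur I Os w) k)"
    unfolding Obar_def Otil_def labT_eq by auto
  then show ?thesis using A0(4)[of I Os R p "Ocur I Os w"] by metis
qed

lemma dich_lab:
  assumes hold: "\<forall>j\<in>I. \<forall>b\<in>Os. p j b > 0 \<longrightarrow> b \<in> C j"
  shows "\<forall>j\<in>LcA I Os (dich_pref C) p T0 k. \<forall>b\<in>Os. p j b > 0 \<longrightarrow> b \<in> TcA I Os (dich_pref C) p T0 k"
proof (induction k)
  case 0
  then show ?case by (simp add: A0)
next
  case (Suc k)
  show ?case
  proof (intro ballI impI)
    fix j b assume j: "j \<in> LcA I Os (dich_pref C) p T0 (Suc k)" and b: "b \<in> Os" and pb: "p j b > 0"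
    show "b \<in> TcA I Os (dich_pref C) p T0 (Suc k)"
    proof (cases "j \<in> LcA I Os (dich_pref C) p T0 k")
      case True
      then show ?thesis using Suc b pb by (auto simp: ASuc(5))
    next
      case False
      then have jn: "j \<in> LnA I Os (dich_pref C) p T0 (Suc k)" using j by (simp add: ASuc(2))
      then have jI: "j \<in> I" and ne: "OtA I Os (dich_pref C) p T0 k j \<noteq> {}" by (auto simp: ASuc(1))
      then obtain b'' b0 where b'': "b'' \<in> Os" "p j b'' > 0" "b0 \<in> TlA I Os (dich_pref C) p T0 k"
        "indiff (dich_pref C) j b0 b''" by (auto simp: OtA_def)
      then have "b0 \<in> C j" using hold jI by (auto simp: indiff_dich)
      moreover have "b \<in> C j" using hold jI b pb by auto
      ultimately have "b \<in> TcA I Os (dich_pref C) p T0 k \<or> b \<in> OtA I Os (dich_pref C) p T0 k j"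
        using b pb b''(3) by (auto simp: OtA_def indiff_dich)
      then show ?thesis using jn by (auto simp: ASuc(4,5))
    qed
  qed
qed

lemma claimA:
  assumes hold: "\<forall>j\<in>I. \<forall>b\<in>Os. p j b > 0 \<longrightarrow> b \<in> C j"
    and j: "j \<in> I" and o: "ob \<in> C j" "ob \<in> TlA I Os (dich_pref C) p T0 k"
    and b: "b \<in> Os" "p j b > 0"
  shows "\<exists>k'. b \<in> TcA I Os (dich_pref C) p T0 k'"
proof (cases "j \<in> LcA I Os (dich_pref C) p T0 k")
  case True
  then show ?thesis using dich_lab[OF hold] b by blast
next
  case False
  show ?thesis
  proof (cases "b \<in> TcA I Os (dich_pref C) p T0 k")
    case True then show ?thesis by blast
  next
    case nb: False
    have "b \<in> C j" using hold j b by auto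
    then have "b \<in> OtA I Os (dich_pref C) p T0 k j" using nb b o by (auto simp: OtA_def indiff_dich)
    then have "b \<in> TlA I Os (dich_pref C) p T0 (Suc k)" using False j by (auto simp: ASuc(1,4))
    then have "b \<in> TcA I Os (dich_pref C) p T0 (Suc k)" by (simp add: ASuc(5))
    then show ?thesis by blast
  qed
qed



definition finv :: "'i set \<Rightarrow> 'o set \<Rightarrow> ('i \<Rightarrow> 'o set) \<Rightarrow> ('i \<Rightarrow> 'o \<Rightarrow> real) \<Rightarrow> ('i \<Rightarrow> 'o \<Rightarrow> real) \<Rightarrow> bool" where
  "finv I Os C w p \<longleftrightarrow> (\<forall>i\<in>I. \<forall>b\<in>Os. w i b \<ge> 0 \<and> p i b \<ge> 0 \<and> (p i b > 0 \<longrightarrow> b \<in> C i))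
    \<and> (\<forall>i\<in>I. \<forall>j\<in>I. \<forall>b\<in>Os. w i b = w j b)
    \<and> (\<forall>i\<in>I. (\<Sum>b\<in>Os. w i b + p i b) = 1)
    \<and> (\<forall>b\<in>Os. (\<Sum>i\<in>I. w i b + p i b) = 1)"

lemma finvD:
  assumes "finv I Os C w p"
  shows "\<And>i b. i \<in> I \<Longrightarrow> b \<in> Os \<Longrightarrow> w i b \<ge> 0"
    "\<And>i b. i \<in> I \<Longrightarrow> b \<in> Os \<Longrightarrow> p i b \<ge> 0"
    "\<And>i b. i \<in> I \<Longrightarrow> b \<in> Os \<Longrightarrow> p i b > 0 \<Longrightarrow> b \<in> C i"
    "\<And>i j b. i \<in> I \<Longrightarrow> j \<in> I \<Longrightarrow> b \<in> Os \<Longrightarrow> w i b = w j b"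
    "\<And>i. i \<in> I \<Longrightarrow> (\<Sum>b\<in>Os. w i b + p i b) = 1"
    "\<And>b. b \<in> Os \<Longrightarrow> (\<Sum>i\<in>I. w i b + p i b) = 1"
  using assms unfolding finv_def by blast+

lemma w_zero_out:
  assumes "finite I" "finv I Os C w p" "b \<in> Os" "b \<notin> Ocur I Os w" "i \<in> I"
  shows "w i b = 0"
proof -
  have nn: "\<forall>j\<in>I. w j b \<ge> 0" using finvD(1)[OF assms(2)] assms(3) by auto
  have "(\<Sum>j\<in>I. w j b) \<le> 0" using assms(3,4) by (auto simp: Ocur_def)
  moreover have "(\<Sum>j\<in>I. w j b) \<ge> 0" using nn by (simp add: sum_nonneg)
  ultimately have "(\<Sum>j\<in>I. w j b) = 0" by linarith
  moreover have "(\<Sum>j\<in>I. w j b) = 0 \<longleftrightarrow> (\<forall>j\<in>I. w j b = 0)"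
    by (rule sum_nonneg_eq_0_iff[OF assms(1)]) (use nn in auto)
  ultimately have "\<forall>j\<in>I. w j b = 0" by simp
  then show ?thesis using assms(5) by simp
qed

lemma s_pos:
  assumes "finite I" "finite Os" "finv I Os C w p" "Ocur I Os w \<noteq> {}" "i \<in> I"
  shows "(\<Sum>b\<in>Os. w i b) > 0"
proof -
  obtain b0 where b0: "b0 \<in> Os" "(\<Sum>j\<in>I. w j b0) > 0" using assms(4) by (auto simp: Ocur_def)
  have "\<not> (\<forall>j\<in>I. w j b0 \<le> 0)"
  proof
    assume "\<forall>j\<in>I. w j b0 \<le> 0"
    then have "(\<Sum>j\<in>I. w j b0) \<le> 0" by (simp add: sum_nonpos)
    with b0 show False by simp
  qed
  then obtain j where j: "j \<in> I" "w j b0 > 0" by (auto simp: not_le)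
  have "w i b0 > 0" using j assms(5) b0(1) finvD(4)[OF assms(3), of i j b0] by auto
  moreover have "w i b0 \<le> (\<Sum>b\<in>Os. w i b)"
    using assms(2,5) b0(1) finvD(1)[OF assms(3)] by (intro member_le_sum) auto
  ultimately show ?thesis by linarith
qed

lemma Cne:
  assumes fin: "finite I" "finite Os" and cardeq: "card Os = card I"
    and CO: "\<forall>i\<in>I. C i \<subseteq> Os" and G: "Gam C I Os = Os"
    and hall: "\<forall>Os'. Os' \<noteq> {} \<and> Os' \<subset> Os \<longrightarrow> card Os' < card {i \<in> I. C i \<inter> Os' \<noteq> {}}"
    and i: "i \<in> I"
  shows "C i \<noteq> {}"
proof (cases "card I \<ge> 2")
  case True
  then have "Os \<noteq> {}" using cardeq by auto
  then obtain ob where ob: "ob \<in> Os" by blast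
  let ?O' = "Os - {ob}"
  have c': "card ?O' = card I - 1" using ob fin cardeq by simp
  have "?O' \<noteq> {}"
  proof
    assume "?O' = {}" then have "card ?O' = 0" by (simp only: card.empty)
    with c' True show False by linarith
  qed
  moreover have "?O' \<subset> Os" using ob by auto
  ultimately have lt: "card ?O' < card {i \<in> I. C i \<inter> ?O' \<noteq> {}}" by (intro hall[rule_format] conjI)
  have sub: "{i \<in> I. C i \<inter> ?O' \<noteq> {}} \<subseteq> I" by auto
  have "card {i \<in> I. C i \<inter> ?O' \<noteq> {}} \<le> card I" using card_mono[OF fin(1) sub] .
  then have "card {i \<in> I. C i \<inter> ?O' \<noteq> {}} = card I" using lt c' by linarith
  then have "{i \<in> I. C i \<inter> ?O' \<noteq> {}} = I" using card_subset_eq[OF fin(1) sub] by blast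
  then show ?thesis using i by blast
next
  case False
  have "I \<noteq> {}" using i by auto
  then have "card I \<noteq> 0" using fin(1) by simp
  then have "card I = 1" using False by linarith
  then obtain x where "I = {x}" using card_1_singletonE by blast
  then have "C i = Os" using G CO i by (auto simp: Gam_def)
  moreover have "Os \<noteq> {}" using cardeq \<open>card I = 1\<close> by auto
  ultimately show ?thesis by simp
qed

lemma key:
  assumes fin: "finite I" "finite Os" and cardeq: "card Os = card I"
    and CO: "\<forall>i\<in>I. C i \<subseteq> Os" and Cne: "\<forall>i\<in>I. C i \<noteq> {}"
    and hall: "\<forall>Os'. Os' \<noteq> {} \<and> Os' \<subset> Os \<longrightarrow> card Os' < card {i \<in> I. C i \<inter> Os' \<noteq> {}}"
    and inv: "finv I Os C w p"
    and ne: "Ocur I Os w \<noteq> {}"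
    and i: "i \<in> I"
  shows "Obar I Os (dich_pref C) w p \<inter> C i \<noteq> {}"
proof
  assume iJ0: "Obar I Os (dich_pref C) w p \<inter> C i = {}"
  define Ob where "Ob = Obar I Os (dich_pref C) w p"
  define U where "U = Os - Ob"
  define J where "J = {j \<in> I. C j \<inter> Ob = {}}"
  have iJ: "i \<in> J" using iJ0 i by (auto simp: J_def Ob_def)
  have ObO: "Ob \<subseteq> Os" by (simp add: Ob_def Obar_sub)
  have hold: "\<forall>j\<in>I. \<forall>b\<in>Os. p j b > 0 \<longrightarrow> b \<in> C j" using finvD(3)[OF inv] by auto
  define s where "s = (\<Sum>b\<in>Os. w i b)"
  have spos: "s > 0" unfolding s_def using s_pos[OF fin inv ne i] .
  have scom: "(\<Sum>b\<in>Os. w j b) = s" if "j \<in> I" for j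
    unfolding s_def using finvD(4)[OF inv, of j i] that i by (intro sum.cong) simp_all
  have pzero: "p j b = 0" if j: "j \<in> I" "j \<notin> J" and b: "b \<in> U" for j b
  proof (rule ccontr)
    assume "p j b \<noteq> 0"
    then have pb: "p j b > 0" using finvD(2)[OF inv, of j b] j b by (auto simp: U_def)
    obtain ob where ob: "ob \<in> C j" "ob \<in> Ob" using j by (auto simp: J_def)
    then obtain k where "ob \<in> TlA I Os (dich_pref C) p (Ocur I Os w) k" using Obar_Tl Ob_def by metis
    moreover have "b \<in> Os" using b by (simp add: U_def)
    ultimately obtain k' where "b \<in> TcA I Os (dich_pref C) p (Ocur I Os w) k'"
      using claimA[OF hold j(1) ob(1)] pb by blast
    then have "b \<in> Ob" using Tc_Obar[of I Os "dich_pref C" p w k'] unfolding Ob_def by blast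
    then show False using b by (simp add: U_def)
  qed
  have finJ: "finite J" using fin by (simp add: J_def)
  have JI: "J \<subseteq> I" by (auto simp: J_def)
  have colsum: "(\<Sum>j\<in>J. p j b) = 1" if b: "b \<in> U" for b
  proof -
    have bO: "b \<in> Os" "b \<notin> Ocur I Os w" using b Ocur_sub[of I Os w] by (auto simp: U_def Ob_def Obar_def)
    have "(\<Sum>j\<in>I. w j b + p j b) = 1" using finvD(6)[OF inv] bO by auto
    moreover have "(\<Sum>j\<in>I. w j b + p j b) = (\<Sum>j\<in>I. p j b)"
      using w_zero_out[OF fin(1) inv bO] by (intro sum.cong) auto
    moreover have "(\<Sum>j\<in>J. p j b) = (\<Sum>j\<in>I. p j b)"
      using pzero b by (intro sum.mono_neutral_left[OF fin(1) JI]) auto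
    ultimately show ?thesis by simp
  qed
  have "real (card U) = (\<Sum>b\<in>U. (\<Sum>j\<in>J. p j b))" using colsum by simp
  also have "\<dots> = (\<Sum>j\<in>J. (\<Sum>b\<in>U. p j b))" by (rule sum.swap)
  also have "\<dots> \<le> (\<Sum>j\<in>J. (\<Sum>b\<in>Os. p j b))"
  proof (rule sum_mono)
    fix j assume "j \<in> J"
    then show "(\<Sum>b\<in>U. p j b) \<le> (\<Sum>b\<in>Os. p j b)"
      using finvD(2)[OF inv] JI fin(2) by (intro sum_mono2) (auto simp: U_def)
  qed
  also have "\<dots> = (\<Sum>j\<in>J. 1 - s)"
  proof (rule sum.cong)
    fix j assume j: "j \<in> J"
    have "(\<Sum>b\<in>Os. w j b + p j b) = 1" using finvD(5)[OF inv] j JI by auto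
    then have "(\<Sum>b\<in>Os. w j b) + (\<Sum>b\<in>Os. p j b) = 1" by (simp add: sum.distrib)
    then show "(\<Sum>b\<in>Os. p j b) = 1 - s" using scom j JI by auto
  qed simp
  also have "\<dots> = real (card J) * (1 - s)" by simp
  also have "\<dots> < real (card J)"
  proof -
    have "card J > 0" using finJ iJ card_gt_0_iff by blast
    then show ?thesis using spos by simp
  qed
  finally have UJ: "card U < card J" by linarith
  have Obne: "Ob \<noteq> {}" using ne by (auto simp: Ob_def Obar_def)
  have "C i \<subseteq> Os - Ob" using CO i iJ0 by (auto simp: Ob_def)
  then have "Ob \<subset> Os" using ObO Cne i by blast
  then have c1: "card Ob < card {j \<in> I. C j \<inter> Ob \<noteq> {}}" using Obne by (intro hall[rule_format] conjI)
  have "{j \<in> I. C j \<inter> Ob \<noteq> {}} = I - J" by (auto simp: J_def)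
  then have c2: "card Ob < card I - card J" using c1 card_Diff_subset[OF finJ JI] by simp
  have finOb: "finite Ob" using fin(2) ObO by (rule finite_subset[rotated])
  have c3: "card U = card Os - card Ob" unfolding U_def by (rule card_Diff_subset[OF finOb ObO])
  have c4: "card Ob \<le> card Os" using card_mono[OF fin(2) ObO] .
  have c5: "card J \<le> card I" using card_mono[OF fin(1) JI] .
  have c6: "card U + card Ob = card I" using c3 c4 cardeq by simp
  have c7: "card Ob + card J < card I" using c2 c5 by (simp add: less_diff_conv)
  show False using UJ c6 c7 by linarith
qed



lemma sum_if_sub: "finite A \<Longrightarrow> B \<subseteq> A \<Longrightarrow> (\<Sum>x\<in>A. if x \<in> B then f x else 0) = sum f B"
  by (simp add: sum.inter_restrict[symmetric] Int_absorb1)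

lemma step_inv:
  assumes fin: "finite I" "finite Os" and cardeq: "card Os = card I"
    and CO: "\<forall>i\<in>I. C i \<subseteq> Os" and Cne: "\<forall>i\<in>I. C i \<noteq> {}"
    and hall: "\<forall>Os'. Os' \<noteq> {} \<and> Os' \<subset> Os \<longrightarrow> card Os' < card {i \<in> I. C i \<inter> Os' \<noteq> {}}"
    and inv: "finv I Os C w p"
    and st: "fttc_step I Os (dich_pref C) w p lam beta gam w' p'"
    and eeet: "\<forall>i\<in>Iact I Os (dich_pref C) w p. \<forall>j\<in>Iact I Os (dich_pref C) w p.
        (\<forall>b\<in>Os. w i b = w j b) \<longrightarrow> (\<forall>b\<in>Ocur I Os w. lam i b = lam j b)"
  shows "finv I Os C w' p'"
proof -
  define R where "R = dich_pref C"
  define Ia where "Ia = Iact I Os R w p"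
  define Ob where "Ob = Obar I Os R w p"
  define T0 where "T0 = Ocur I Os w"
  define Tt where "Tt = Otil I Os R w p"
  define Oi where "Oi = Otil_i I Os R w p"
  note defs = R_def[symmetric] Ia_def[symmetric] Ob_def[symmetric] T0_def[symmetric] Tt_def[symmetric] Oi_def[symmetric]
  have st2: "T0 \<noteq> {} \<and>
      (\<forall>i\<in>Ia. \<forall>b\<in>Ob. lam i b \<ge> 0) \<and>
      (\<forall>b\<in>Ob. (\<Sum>i\<in>Ia. lam i b) = 1) \<and>
      (\<forall>i\<in>Ia. \<forall>b\<in>T0. lam i b > 0 \<longrightarrow> w i b > 0) \<and>
      (\<forall>i\<in>Ia. \<forall>b\<in>Tt. lam i b > 0 \<longrightarrow> b \<in> Oi i) \<and>
      (\<forall>i\<in>Ia. \<forall>b\<in>T0. 0 \<le> beta i b \<and> beta i b \<le> w i b) \<and>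
      (\<forall>i\<in>Ia. (\<forall>b\<in>Ob. gam i b \<ge> 0) \<and> (\<Sum>b\<in>Ob. gam i b) = 1 \<and>
                 (\<forall>b\<in>Ob. gam i b > 0 \<longrightarrow> b \<in> Aset I Os R w p i)) \<and>
      (\<exists>xi xo. fttc_maxsol I Os R w p lam beta gam xi xo \<and>
         (\<forall>i\<in>I. \<forall>b\<in>Os. w' i b =
             (if i \<in> Ia then (if b \<in> T0 then w i b - lam i b * xo b else 0) else w i b)) \<and>
         (\<forall>i\<in>I. \<forall>b\<in>Os. p' i b =
             (if i \<in> Ia then p i b
                 - (if b \<in> Oi i then lam i b * xo b else 0)
                 + (if b \<in> Ob then gam i b * xi i else 0)
              else p i b)))"
    using st unfolding fttc_step_def Let_def defs .
  have F1: "T0 \<noteq> {}" and F2: "\<forall>i\<in>Ia. \<forall>b\<in>Ob. lam i b \<ge> 0" using st2 by blast+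
  have F3: "\<forall>b\<in>Ob. (\<Sum>i\<in>Ia. lam i b) = 1" using st2 by blast+
  have F4: "\<forall>i\<in>Ia. \<forall>b\<in>Tt. lam i b > 0 \<longrightarrow> b \<in> Oi i" using st2 by blast+
  have F5: "\<forall>i\<in>Ia. \<forall>b\<in>T0. 0 \<le> beta i b \<and> beta i b \<le> w i b" using st2 by blast+
  have F6: "\<forall>i\<in>Ia. (\<forall>b\<in>Ob. gam i b \<ge> 0) \<and> (\<Sum>b\<in>Ob. gam i b) = 1 \<and>
                 (\<forall>b\<in>Ob. gam i b > 0 \<longrightarrow> b \<in> Aset I Os R w p i)" using st2 by blast+
  from st2 obtain xi xo where ms: "fttc_maxsol I Os R w p lam beta gam xi xo"
    and weq: "\<forall>i\<in>I. \<forall>b\<in>Os. w' i b =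
             (if i \<in> Ia then (if b \<in> T0 then w i b - lam i b * xo b else 0) else w i b)"
    and peq: "\<forall>i\<in>I. \<forall>b\<in>Os. p' i b =
             (if i \<in> Ia then p i b
                 - (if b \<in> Oi i then lam i b * xo b else 0)
                 + (if b \<in> Ob then gam i b * xi i else 0)
              else p i b)"
    by blast
  have sol: "(\<forall>i\<in>Ia. xi i \<ge> 0) \<and> (\<forall>b\<in>Ob. xo b \<ge> 0) \<and>
      (\<forall>b\<in>Ob. xo b = (\<Sum>i\<in>Ia. gam i b * xi i)) \<and>
      (\<forall>i\<in>Ia. xi i = (\<Sum>b\<in>Ob. lam i b * xo b)) \<and>
      (\<forall>i\<in>Ia. \<forall>b\<in>T0. lam i b * xo b \<le> beta i b) \<and>
      (\<forall>i\<in>Ia. \<forall>b\<in>Tt. lam i b * xo b \<le> p i b)"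
    using ms unfolding fttc_maxsol_def fttc_sol_def Let_def defs by (rule conjunct1)
  have S1: "\<forall>i\<in>Ia. xi i \<ge> 0" and S2: "\<forall>b\<in>Ob. xo b \<ge> 0" using sol by blast+
  have S3: "\<forall>b\<in>Ob. xo b = (\<Sum>i\<in>Ia. gam i b * xi i)" using sol by blast+
  have S4: "\<forall>i\<in>Ia. xi i = (\<Sum>b\<in>Ob. lam i b * xo b)" using sol by blast+
  have S5: "\<forall>i\<in>Ia. \<forall>b\<in>T0. lam i b * xo b \<le> beta i b" using sol by blast+
  have S6: "\<forall>i\<in>Ia. \<forall>b\<in>Tt. lam i b * xo b \<le> p i b" using sol by blast+
  have ObO: "Ob \<subseteq> Os" unfolding Ob_def by (rule Obar_sub)
  have T0Ob: "T0 \<subseteq> Ob" "Tt \<subseteq> Ob" by (auto simp: T0_def Ob_def Tt_def Obar_def)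
  have ObU: "Ob = T0 \<union> Tt" by (simp add: T0_def Ob_def Tt_def Obar_def)
  have disj: "Tt \<inter> T0 = {}" unfolding Tt_def T0_def by (rule Otil_disj)
  have OiT: "Oi i \<subseteq> Tt" for i unfolding Oi_def Tt_def by (rule Otil_i_sub)
  have IaI: "Ia = I"
  proof
    show "Ia \<subseteq> I" unfolding Ia_def Iact_def using Lall_sub[of I Os R w p] by auto
    show "I \<subseteq> Ia"
    proof
      fix i assume "i \<in> I"
      then have "(\<Sum>b\<in>Os. w i b) > 0" using s_pos[OF fin inv] F1 by (simp add: T0_def)
      then show "i \<in> Ia" using \<open>i \<in> I\<close> by (simp add: Ia_def Iact_def)
    qed
  qed
  note F2 = F2[unfolded IaI] and F3 = F3[unfolded IaI] and F4 = F4[unfolded IaI]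
    and F5 = F5[unfolded IaI] and F6 = F6[unfolded IaI]
    and S1 = S1[unfolded IaI] and S3 = S3[unfolded IaI] and S4 = S4[unfolded IaI]
    and S5 = S5[unfolded IaI] and S6 = S6[unfolded IaI]
  have weq': "w' i b = (if b \<in> T0 then w i b - lam i b * xo b else 0)" if "i \<in> I" "b \<in> Os" for i b
    using weq that IaI by simp
  have peq': "p' i b = p i b - (if b \<in> Oi i then lam i b * xo b else 0)
                 + (if b \<in> Ob then gam i b * xi i else 0)" if "i \<in> I" "b \<in> Os" for i b
    using peq that IaI by simp
  have wz: "w i b = 0" if "i \<in> I" "b \<in> Os" "b \<notin> T0" for i b
    using w_zero_out[OF fin(1) inv] that by (simp add: T0_def)
  have E: "w' i b + p' i b = w i b + p i b - (if b \<in> Ob then lam i b * xo b else 0)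
            + (if b \<in> Ob then gam i b * xi i else 0)" if i: "i \<in> I" and b: "b \<in> Os" for i b
  proof (cases "b \<in> T0")
    case True
    then have "b \<notin> Oi i" using OiT[of i] disj by blast
    then show ?thesis using True T0Ob weq'[OF i b] peq'[OF i b] by auto
  next
    case False
    note w0 = wz[OF i b False]
    show ?thesis
    proof (cases "b \<in> Oi i")
      case True
      then have "b \<in> Ob" using OiT T0Ob by blast
      then show ?thesis using True False w0 weq'[OF i b] peq'[OF i b] by auto
    next
      case nOi: False
      have "lam i b * xo b = 0" if "b \<in> Ob"
      proof -
        have "b \<in> Tt" using that False ObU by blast
        then have "lam i b = 0" using F2 F4 i nOi that by force
        then show ?thesis by simp
      qed
      then show ?thesis using nOi False w0 weq'[OF i b] peq'[OF i b] by auto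
    qed
  qed
  have hold: "p' i b > 0 \<Longrightarrow> b \<in> C i" if i: "i \<in> I" and b: "b \<in> Os" for i b
  proof -
    assume pos: "p' i b > 0"
    show "b \<in> C i"
    proof (cases "p i b > 0")
      case True then show ?thesis using finvD(3)[OF inv i b] by simp
    next
      case False
      then have p0: "p i b = 0" using finvD(2)[OF inv i b] by simp
      have sub: "(if b \<in> Oi i then lam i b * xo b else 0) \<ge> 0"
      proof (cases "b \<in> Oi i")
        case True
        then have "b \<in> Ob" using OiT T0Ob by blast
        then show ?thesis using True F2 S2 i by simp
      qed simp
      have "(if b \<in> Ob then gam i b * xi i else 0) > 0" using pos p0 sub peq'[OF i b] by linarith
      then have bOb: "b \<in> Ob" and gx: "gam i b * xi i > 0" by (auto split: if_splits)
      have "gam i b > 0"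
      proof (rule ccontr)
        assume "\<not> gam i b > 0"
        then have "gam i b = 0" using F6 i bOb by force
        then show False using gx by simp
      qed
      then have "b \<in> Aset I Os R w p i" using F6 i bOb by blast
      then have bB: "\<forall>b'\<in>Ob. dich_pref C i b b'" by (simp add: Aset_def Bset_def Ob_def R_def)
      obtain b' where "b' \<in> Ob" "b' \<in> C i"
        using key[OF fin cardeq CO Cne hall inv, of i] F1 i by (auto simp: T0_def Ob_def R_def)
      then show ?thesis using bB by (auto simp: dich_pref_def)
    qed
  qed
  show ?thesis
    unfolding finv_def
  proof (intro conjI ballI)
    fix i b assume i: "i \<in> I" and b: "b \<in> Os"
    show "w' i b \<ge> 0"
    proof (cases "b \<in> T0")
      case True
      then show ?thesis using weq'[OF i b] S5 F5 i by force
    qed (simp add: weq'[OF i b])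
    show "p' i b \<ge> 0"
    proof -
      have a: "p i b - (if b \<in> Oi i then lam i b * xo b else 0) \<ge> 0"
      proof (cases "b \<in> Oi i")
        case True then show ?thesis using S6 i OiT by force
      qed (simp add: finvD(2)[OF inv i b])
      have c: "(if b \<in> Ob then gam i b * xi i else 0) \<ge> 0" using F6 S1 i by simp
      show ?thesis using a c peq'[OF i b] by linarith
    qed
    show "p' i b > 0 \<longrightarrow> b \<in> C i" using hold[OF i b] by blast
  next
    fix i j b assume i: "i \<in> I" and j: "j \<in> I" and b: "b \<in> Os"
    show "w' i b = w' j b"
    proof (cases "b \<in> T0")
      case True
      have wij: "\<forall>b\<in>Os. w i b = w j b" using finvD(4)[OF inv i j] by blast
      have ii: "i \<in> Iact I Os (dich_pref C) w p" using i IaI unfolding Ia_def R_def by simp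
      have jj: "j \<in> Iact I Os (dich_pref C) w p" using j IaI unfolding Ia_def R_def by simp
      have "\<forall>b\<in>Ocur I Os w. lam i b = lam j b" using mp[OF bspec[OF bspec[OF eeet ii] jj] wij] .
      then have "lam i b = lam j b" using True unfolding T0_def by blast
      then show ?thesis using weq'[OF i b] weq'[OF j b] True finvD(4)[OF inv i j b] by simp
    next
      case False then show ?thesis using weq'[OF i b] weq'[OF j b] by simp
    qed
  next
    fix i assume i: "i \<in> I"
    have "(\<Sum>b\<in>Os. w' i b + p' i b) = (\<Sum>b\<in>Os. (w i b + p i b) - (if b \<in> Ob then lam i b * xo b else 0)
            + (if b \<in> Ob then gam i b * xi i else 0))"
      using E i by (intro sum.cong) auto
    also have "\<dots> = (\<Sum>b\<in>Os. w i b + p i b) - (\<Sum>b\<in>Os. if b \<in> Ob then lam i b * xo b else 0)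
            + (\<Sum>b\<in>Os. if b \<in> Ob then gam i b * xi i else 0)"
      by (simp add: sum.distrib sum_subtractf)
    also have "\<dots> = 1 - (\<Sum>b\<in>Ob. lam i b * xo b) + (\<Sum>b\<in>Ob. gam i b * xi i)"
      using finvD(5)[OF inv i] sum_if_sub[OF fin(2) ObO, of "\<lambda>b. lam i b * xo b"]
        sum_if_sub[OF fin(2) ObO, of "\<lambda>b. gam i b * xi i"] by simp
    also have "\<dots> = 1 - xi i + xi i * (\<Sum>b\<in>Ob. gam i b)"
    proof -
      have "(\<Sum>b\<in>Ob. lam i b * xo b) = xi i" using S4 i by simp
      moreover have "(\<Sum>b\<in>Ob. gam i b * xi i) = xi i * (\<Sum>b\<in>Ob. gam i b)"
        by (simp add: sum_distrib_left mult.commute)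
      ultimately show ?thesis by simp
    qed
    also have "\<dots> = 1" using F6 i by simp
    finally show "(\<Sum>b\<in>Os. w' i b + p' i b) = 1" .
  next
    fix b assume b: "b \<in> Os"
    have "(\<Sum>i\<in>I. w' i b + p' i b) = (\<Sum>i\<in>I. (w i b + p i b) - (if b \<in> Ob then lam i b * xo b else 0)
            + (if b \<in> Ob then gam i b * xi i else 0))"
      using E b by (intro sum.cong) auto
    also have "\<dots> = (\<Sum>i\<in>I. w i b + p i b) - (\<Sum>i\<in>I. if b \<in> Ob then lam i b * xo b else 0)
            + (\<Sum>i\<in>I. if b \<in> Ob then gam i b * xi i else 0)"
      by (simp add: sum.distrib sum_subtractf)
    also have "\<dots> = 1"
    proof (cases "b \<in> Ob")
      case True
      have "(\<Sum>i\<in>I. lam i b * xo b) = xo b" using F3 True by (simp add: sum_distrib_right[symmetric])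
      then show ?thesis using True S3 finvD(6)[OF inv b] by simp
    next
      case False then show ?thesis using finvD(6)[OF inv b] by simp
    qed
    finally show "(\<Sum>i\<in>I. w' i b + p' i b) = 1" .
  qed
qed



lemma gam_ge:
  assumes fin: "finite I" "finite Os" and cardeq: "card Os = card I"
    and CO: "\<forall>i\<in>I. C i \<subseteq> Os" and Cne: "\<forall>i\<in>I. C i \<noteq> {}"
    and hall: "\<forall>Os'. Os' \<noteq> {} \<and> Os' \<subset> Os \<longrightarrow> card Os' < card {i \<in> I. C i \<inter> Os' \<noteq> {}}"
    and Y: "Y \<subseteq> I" "Y \<noteq> {}"
  shows "card Y \<le> card (Gam C Y Os)"
proof -
  define G where "G = Gam C Y Os"
  have GO: "G \<subseteq> Os" by (auto simp: G_def Gam_def)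
  have finG: "finite G" using fin(2) GO by (rule finite_subset[rotated])
  have finY: "finite Y" using fin(1) Y(1) by (rule finite_subset[rotated])
  have CY: "C i \<subseteq> G" if "i \<in> Y" for i using that Y CO by (auto simp: G_def Gam_def)
  show ?thesis
  proof (cases "Os - G = {}")
    case True
    then have "G = Os" using GO by blast
    then show ?thesis using card_mono[OF fin(1) Y(1)] cardeq by (simp add: G_def)
  next
    case False
    have "G \<noteq> {}"
    proof
      assume "G = {}"
      obtain i where "i \<in> Y" using Y by blast
      then show False using CY Cne Y \<open>G = {}\<close> by blast
    qed
    then have "Os - G \<subset> Os" using GO by blast
    then have c1: "card (Os - G) < card {i \<in> I. C i \<inter> (Os - G) \<noteq> {}}"
      using False by (intro hall[rule_format] conjI)
    have "{i \<in> I. C i \<inter> (Os - G) \<noteq> {}} \<subseteq> I - Y" using CY by blast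
    then have "card {i \<in> I. C i \<inter> (Os - G) \<noteq> {}} \<le> card (I - Y)"
      using fin(1) by (intro card_mono) auto
    also have "\<dots> = card I - card Y" by (rule card_Diff_subset[OF finY Y(1)])
    finally have c2: "card (Os - G) < card I - card Y" using c1 by linarith
    have c3: "card (Os - G) = card Os - card G" by (rule card_Diff_subset[OF finG GO])
    have c4: "card G \<le> card Os" using card_mono[OF fin(2) GO] .
    have c5: "card Y \<le> card I" using card_mono[OF fin(1) Y(1)] .
    have "card Os - card G + card Y < card I" using c2 c3 c5 by linarith
    then show ?thesis using c4 cardeq unfolding G_def by linarith
  qed
qed

lemma bneck_I:
  assumes fin: "finite I" "finite Os" and cardeq: "card Os = card I"
    and CO: "\<forall>i\<in>I. C i \<subseteq> Os" and Cne: "\<forall>i\<in>I. C i \<noteq> {}"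
    and hall: "\<forall>Os'. Os' \<noteq> {} \<and> Os' \<subset> Os \<longrightarrow> card Os' < card {i \<in> I. C i \<inter> Os' \<noteq> {}}"
    and G: "Gam C I Os = Os" and Ine: "I \<noteq> {}"
  shows "(THE X. is_bneck C I Os X) = I" and "ratio C I Os = 1"
proof -
  have cI: "card I > 0" using fin(1) Ine by auto
  show r1: "ratio C I Os = 1" unfolding ratio_def G using cardeq cI by simp
  have rY: "ratio C I Os \<le> ratio C Y Os" if "Y \<subseteq> I" "Y \<noteq> {}" for Y
  proof -
    have finY: "finite Y" using fin(1) that(1) by (rule finite_subset[rotated])
    have "card Y > 0" using finY that(2) by auto
    moreover have "card Y \<le> card (Gam C Y Os)" by (rule gam_ge[OF fin cardeq CO Cne hall that])
    ultimately have "1 \<le> ratio C Y Os" unfolding ratio_def by (simp add: le_divide_eq)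
    then show ?thesis using r1 by simp
  qed
  have bI: "is_bneck C I Os I"
    unfolding is_bneck_def using Ine rY card_mono[OF fin(1)] by blast
  show "(THE X. is_bneck C I Os X) = I"
  proof (rule the_equality)
    show "is_bneck C I Os I" by (rule bI)
  next
    fix X assume X: "is_bneck C I Os X"
    then have XI: "X \<subseteq> I" "X \<noteq> {}" by (auto simp: is_bneck_def)
    have "ratio C X Os \<le> ratio C I Os" using X Ine by (auto simp: is_bneck_def)
    moreover have "ratio C I Os \<le> ratio C X Os" using rY XI by blast
    ultimately have "ratio C I Os = ratio C X Os" by linarith
    then have eqr: "ratio C I Os = ratio C X Os" .
    have lg: "\<forall>Y. Y \<subseteq> I \<and> Y \<noteq> {} \<and> ratio C Y Os = ratio C X Os \<longrightarrow> card Y \<le> card X"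
      using X unfolding is_bneck_def by (rule conjunct2[THEN conjunct2, THEN conjunct2])
    have "I \<subseteq> I \<and> I \<noteq> {} \<and> ratio C I Os = ratio C X Os" using Ine eqr by simp
    then have "card I \<le> card X" by (rule mp[OF spec[OF lg, of I]])
    then have "card X = card I" using card_mono[OF fin(1) XI(1)] by linarith
    then show "X = I" by (rule card_subset_eq[OF fin(1) XI(1)])
  qed
qed

theorem mainTheorem7:
  fixes I :: "'i set" and Os :: "'o set" and C :: "'i \<Rightarrow> 'o set"
    and D :: nat and ws ps lams betas gams :: "nat \<Rightarrow> 'i \<Rightarrow> 'o \<Rightarrow> real"
  assumes "finite I" and "finite Os" and "card Os = card I"
    and "\<forall>i\<in>I. C i \<subseteq> Os"
    and "Gam C I Os = Os"
    and "\<forall>Os'. Os' \<noteq> {} \<and> Os' \<subset> Os \<longrightarrow> card Os' < card {i \<in> I. C i \<inter> Os' \<noteq> {}}"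
    and "fttc_run I Os (dich_pref C) (\<lambda>i b. 1 / real (card I)) D ws ps lams betas gams"
    and "stepwise_EEET I Os (dich_pref C) D ws ps lams"
  shows "\<forall>k\<in>{1..bm C I Os}. \<forall>i\<in>bX C I Os k.
           (\<Sum>b\<in>C i. ps D i b) = ratio C (bX C I Os k) (snd (bseq C I Os (k-1)))"
proof (cases "I = {}")
  case True
  then have "bm C I Os = 0" unfolding bm_def by simp
  then show ?thesis by simp
next
  case Ine: False
  note fin = assms(1,2) and cardeq = assms(3) and CO = assms(4) and G = assms(5) and hall = assms(6)
    and run = assms(7) and ee = assms(8)
  have Cne: "\<forall>i\<in>I. C i \<noteq> {}" using Cne[OF fin cardeq CO G hall] by blast
  note bn = bneck_I[OF fin cardeq CO Cne hall G Ine]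
  have bs1: "bseq C I Os (Suc 0) = ({}, Os - Gam C I Os)" using bn(1) by (simp add: Let_def)
  have bm1: "bm C I Os = 1"
    unfolding bm_def
  proof (rule Least_equality)
    show "fst (bseq C I Os 1) = {}" using bs1 by simp
    fix m assume "fst (bseq C I Os m) = {}"
    then show "1 \<le> m" using Ine by (cases m) auto
  qed
  have bX1: "bX C I Os 1 = I" unfolding bX_def using bn(1) by simp
  have cI: "card I > 0" using fin(1) Ine by auto
  have run0: "\<forall>i\<in>I. \<forall>b\<in>Os. ws 0 i b = 1 / real (card I) \<and> ps 0 i b = 0"
    and runS: "\<forall>d\<in>{1..D}. fttc_step I Os (dich_pref C) (ws (d-1)) (ps (d-1)) (lams d) (betas d) (gams d) (ws d) (ps d)"
    and runE: "Ocur I Os (ws D) = {}"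
    using run unfolding fttc_run_def by blast+
  have invd: "d \<le> D \<Longrightarrow> finv I Os C (ws d) (ps d)" for d
  proof (induction d)
    case 0
    have "(\<Sum>b\<in>Os. ws 0 i b + ps 0 i b) = 1" if "i \<in> I" for i
    proof -
      have "(\<Sum>b\<in>Os. ws 0 i b + ps 0 i b) = (\<Sum>b\<in>Os. 1 / real (card I))"
        using run0 that by (intro sum.cong) auto
      then show ?thesis using cardeq cI by simp
    qed
    moreover have "(\<Sum>i\<in>I. ws 0 i b + ps 0 i b) = 1" if "b \<in> Os" for b
    proof -
      have "(\<Sum>i\<in>I. ws 0 i b + ps 0 i b) = (\<Sum>i\<in>I. 1 / real (card I))"
        using run0 that by (intro sum.cong) auto
      then show ?thesis using cI by simp
    qed
    ultimately show ?case unfolding finv_def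
    proof (intro conjI ballI)
      fix i j b assume "i \<in> I" "j \<in> I" "b \<in> Os"
      then show "ws 0 i b = ws 0 j b" using run0 by simp
    next
      fix i b assume "i \<in> I" "b \<in> Os"
      then show "0 \<le> ws 0 i b" "0 \<le> ps 0 i b" "0 < ps 0 i b \<longrightarrow> b \<in> C i" using run0 by simp_all
    qed blast+
  next
    case (Suc d)
    then have ih: "finv I Os C (ws d) (ps d)" by simp
    have sd: "Suc d \<in> {1..D}" using Suc.prems by simp
    have st: "fttc_step I Os (dich_pref C) (ws d) (ps d) (lams (Suc d)) (betas (Suc d)) (gams (Suc d)) (ws (Suc d)) (ps (Suc d))"
      using bspec[OF runS sd] unfolding diff_Suc_1 .
    have "\<forall>i\<in>Iact I Os (dich_pref C) (ws d) (ps d). \<forall>j\<in>Iact I Os (dich_pref C) (ws d) (ps d).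
        (\<forall>b\<in>Os. ws d i b = ws d j b) \<longrightarrow> (\<forall>b\<in>Ocur I Os (ws d). lams (Suc d) i b = lams (Suc d) j b)"
      using bspec[OF ee[unfolded stepwise_EEET_def] sd] unfolding diff_Suc_1 .
    then show ?case using step_inv[OF fin cardeq CO Cne hall ih st] by blast
  qed
  have invD: "finv I Os C (ws D) (ps D)" using invd by simp
  have final: "(\<Sum>b\<in>C i. ps D i b) = 1" if i: "i \<in> I" for i
  proof -
    have w0: "ws D i b = 0" if "b \<in> Os" for b
      using w_zero_out[OF fin(1) invD that _ i] runE by simp
    have "(\<Sum>b\<in>Os. ps D i b) = 1"
      using finvD(5)[OF invD i] w0 by simp
    moreover have "(\<Sum>b\<in>C i. ps D i b) = (\<Sum>b\<in>Os. ps D i b)"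
    proof (rule sum.mono_neutral_left[OF fin(2)])
      show "C i \<subseteq> Os" using CO i by blast
      show "\<forall>b\<in>Os - C i. ps D i b = 0"
      proof
        fix b assume b: "b \<in> Os - C i"
        then have "ps D i b \<ge> 0" using finvD(2)[OF invD i] by blast
        moreover have "\<not> ps D i b > 0" using finvD(3)[OF invD i] b by blast
        ultimately show "ps D i b = 0" by linarith
      qed
    qed
    ultimately show ?thesis by simp
  qed
  show ?thesis unfolding bm1 using bX1 bn(2) final by simp
qed

end
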